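(* Let $A_1,A_2\in\mathcal{C}^{\mathrm{geo}}$ and let $B=A_1\cap A_2$ be a common induced substructure of $A_1$ and $A_2$ such that $B\le A_1$. Let $D$ be the geometric amalgam of $A_1$ and $A_2$ over $B$. Then $D\in\mathcal{C}^{\mathrm{geo}}$.
   Context: Fix a natural number $n$ and a symmetric irreflexive $n$-ary relation symbol $S$; all substructures are induced substructures. For an $\{S\}$-structure $A$, a set $K\subseteq A$ with $|K|\ge n$ is a clique if every $n$-element subset of $K$ (as a tuple of distinct elements in any order) lies in $S^A$; it is a maximal clique if no clique of $A$ properly contains it. $\mathcal{M}(A)$ denotes the set of maximal cliques of $A$. For a finite set $X$ put $|X|_*=\max\{0,|X|-(n-1)\}$. For a finite $\{S\}$-structure $A$ put $s(A)=\sum_{K\in\mathcal{M}(A)}|K|_*$ and $\delta_s(A)=|A|-s(A)$. For finite $B\subseteq A$, $\delta_s(A/B)=\delta_s(A)-\delta_s(B)$. Write $B\le A$ if $\delta_s(X/B)\ge 0$ for every finite $X$ with $B\subseteq X\subseteq A$. An $\{S\}$-structure $A$ is geometric if whenever $X\subseteq A$ with $|X|\ge n$ and $\delta_s(X)<n$, there is a unique $K\in\mathcal{M}(A)$ with $X\subseteq K$. $\mathcal{C}^{\mathrm{geo}}$ is the class of finite geometric $\{S\}$-structures. For $A_1,A_2\in\mathcal{C}^{\mathrm{geo}}$ with $B=A_1\cap A_2$ a common induced substructure, the geometric amalgam of $A_1$ and $A_2$ over $B$ is the unique $\{S\}$-structure $D$ with universe $A_1\cup A_2$ whose set of maximal cliques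 is $M\cup M_1\cup M_2$, where $M=\{K_1\cup K_2: K_1\in\mathcal{M}(A_1),K_2\in\mathcal{M}(A_2),|K_1\cap K_2|\ge n-1\}$, $M_1=\{K\in\mathcal{M}(A_1):|K\cap L|<n-1\text{ for all }L\in\mathcal{M}(A_2)\}$, and $M_2=\{K\in\mathcal{M}(A_2):|K\cap L|<n-1\text{ for all }L\in\mathcal{M}(A_1)\}$ (i.e. $S^D$ is the set of $n$-tuples of distinct elements whose underlying set is contained in one of these sets). *)

theory Defs
  imports Main
begin

text \<open>An \<open>{S}\<close>-structure with universe \<open>A\<close>: since \<open>S\<close> is a symmetric irreflexive
  n-ary relation, it is represented by the set of underlying sets of its tuples,
  i.e. a set of n-element subsets of \<open>A\<close> (an n-tuple of distinct elements is in \<open>S\<close>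
  iff its underlying set is in this set).\<close>

definition struct :: "nat \<Rightarrow> 'a set \<Rightarrow> 'a set set \<Rightarrow> bool" where
  "struct n A S \<longleftrightarrow> S \<subseteq> {e. e \<subseteq> A \<and> card e = n}"

definition induced :: "'a set set \<Rightarrow> 'a set \<Rightarrow> 'a set set" where
  "induced S X = {e \<in> S. e \<subseteq> X}"

definition clique :: "nat \<Rightarrow> 'a set \<Rightarrow> 'a set set \<Rightarrow> 'a set \<Rightarrow> bool" where
  "clique n A S K \<longleftrightarrow> K \<subseteq> A \<and> finite K \<and> n \<le> card K \<and>
     (\<forall>e. e \<subseteq> K \<and> card e = n \<longrightarrow> e \<in> S)"

definition maxcliques :: "nat \<Rightarrow> 'a set \<Rightarrow> 'a set set \<Rightarrow> 'a set set" where
  "maxcliques n A S = {K. clique n A S K \<and> (\<forall>K'. clique n A S K' \<and> K \<subseteq> K' \<longrightarrow> K' = K)}"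

definition starcard :: "nat \<Rightarrow> 'a set \<Rightarrow> int" where
  "starcard n X = max 0 (int (card X) - (int n - 1))"

definition s_count :: "nat \<Rightarrow> 'a set \<Rightarrow> 'a set set \<Rightarrow> int" where
  "s_count n A S = (\<Sum>K\<in>maxcliques n A S. starcard n K)"

definition delta :: "nat \<Rightarrow> 'a set \<Rightarrow> 'a set set \<Rightarrow> int" where
  "delta n A S = int (card A) - s_count n A S"

definition delta_on :: "nat \<Rightarrow> 'a set set \<Rightarrow> 'a set \<Rightarrow> int" where
  "delta_on n S X = delta n X (induced S X)"

definition strong_sub :: "nat \<Rightarrow> 'a set \<Rightarrow> 'a set \<Rightarrow> 'a set set \<Rightarrow> bool" where
  "strong_sub n B A S \<longleftrightarrow> B \<subseteq> A \<and>
     (\<forall>X. finite X \<and> B \<subseteq> X \<and> X \<subseteq> A \<longrightarrow> delta_on n S X - delta_on n S B \<ge> 0)"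

definition geometric :: "nat \<Rightarrow> 'a set \<Rightarrow> 'a set set \<Rightarrow> bool" where
  "geometric n A S \<longleftrightarrow>
     (\<forall>X. X \<subseteq> A \<and> finite X \<and> n \<le> card X \<and> delta_on n S X < int n \<longrightarrow>
        (\<exists>!K. K \<in> maxcliques n A S \<and> X \<subseteq> K))"

definition Cgeo :: "nat \<Rightarrow> 'a set \<Rightarrow> 'a set set \<Rightarrow> bool" where
  "Cgeo n A S \<longleftrightarrow> finite A \<and> struct n A S \<and> geometric n A S"

definition amalg_M :: "nat \<Rightarrow> 'a set \<Rightarrow> 'a set set \<Rightarrow> 'a set \<Rightarrow> 'a set set \<Rightarrow> 'a set set" where
  "amalg_M n A1 S1 A2 S2 = {K1 \<union> K2 | K1 K2. K1 \<in> maxcliques n A1 S1 \<and> K2 \<in> maxcliques n A2 S2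
      \<and> int (card (K1 \<inter> K2)) \<ge> int n - 1}"

definition amalg_M1 :: "nat \<Rightarrow> 'a set \<Rightarrow> 'a set set \<Rightarrow> 'a set \<Rightarrow> 'a set set \<Rightarrow> 'a set set" where
  "amalg_M1 n A1 S1 A2 S2 = {K \<in> maxcliques n A1 S1.
      \<forall>L \<in> maxcliques n A2 S2. int (card (K \<inter> L)) < int n - 1}"

definition amalg_S :: "nat \<Rightarrow> 'a set \<Rightarrow> 'a set set \<Rightarrow> 'a set \<Rightarrow> 'a set set \<Rightarrow> 'a set set" where
  "amalg_S n A1 S1 A2 S2 = {e. e \<subseteq> A1 \<union> A2 \<and> card e = n \<and>
     (\<exists>K \<in> amalg_M n A1 S1 A2 S2 \<union> amalg_M1 n A1 S1 A2 S2 \<union> amalg_M1 n A2 S2 A1 S1. e \<subseteq> K)}"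

end

theory Submission
  imports Defs
begin

definition gg :: "nat \<Rightarrow> nat \<Rightarrow> int" where "gg n t = max 0 (int t - (int n - 1))"

definition FF :: "nat \<Rightarrow> 'a set set \<Rightarrow> 'a set \<Rightarrow> int" where
  "FF n M X = int (card X) - (\<Sum>K\<in>M. gg n (card (K \<inter> X)))"

lemma starcard_gg: "starcard n X = gg n (card X)"
  by (simp add: starcard_def gg_def)

lemma gg_nonneg: "0 \<le> gg n t" by (simp add: gg_def)
lemma gg_zero: "t < n \<Longrightarrow> gg n t = 0" by (simp add: gg_def)
lemma gg_big: "n \<le> t + 1 \<Longrightarrow> gg n t = int t - int n + 1" by (simp add: gg_def)
lemma gg_pos: "n \<le> t \<Longrightarrow> 0 < gg n t" by (simp add: gg_def)
lemma gg_mono: "t \<le> s \<Longrightarrow> gg n t \<le> gg n s" by (simp add: gg_def)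
lemma gg_lip: "gg n (t + w) - gg n t \<le> int w" by (simp add: gg_def)
lemma gg_conv: "t \<le> s \<Longrightarrow> gg n (t + w) - gg n t \<le> gg n (s + w) - gg n s"
  by (simp add: gg_def)
lemma gg_small: "t + 2 \<le> n \<Longrightarrow> 1 \<le> w \<Longrightarrow> gg n (t + w) \<le> int w - 1"
  by (simp add: gg_def)
lemma gg_pos_iff: "0 < gg n t \<longleftrightarrow> n \<le> t" unfolding gg_def by linarith

lemma sum_two_le:
  fixes h :: "'b \<Rightarrow> int"
  assumes "finite F" "a \<in> F" "b \<in> F" "a \<noteq> b" "\<And>x. x \<in> F \<Longrightarrow> 0 \<le> h x"
  shows "h a + h b \<le> sum h F"
proof -
  have "sum h {a,b} \<le> sum h F"
    by (rule sum_mono2) (use assms in auto)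
  thus ?thesis using assms by simp
qed

lemma sum_one_le:
  fixes h :: "'b \<Rightarrow> int"
  assumes "finite F" "a \<in> F" "\<And>x. x \<in> F \<Longrightarrow> 0 \<le> h x"
  shows "h a \<le> sum h F"
  using member_le_sum[of a F h] assms by auto

lemma mc_clique: "K \<in> maxcliques n A S \<Longrightarrow> clique n A S K"
  by (simp add: maxcliques_def)

lemma mc_max: "K \<in> maxcliques n A S \<Longrightarrow> clique n A S K' \<Longrightarrow> K \<subseteq> K' \<Longrightarrow> K' = K"
  by (simp add: maxcliques_def)

lemma mc_incomp: "K \<in> maxcliques n A S \<Longrightarrow> L \<in> maxcliques n A S \<Longrightarrow> K \<subseteq> L \<Longrightarrow> K = L"
  by (metis mc_clique mc_max)

lemma mc_sub: "K \<in> maxcliques n A S \<Longrightarrow> K \<subseteq> A"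
  by (simp add: maxcliques_def clique_def)

lemma mc_fin: "K \<in> maxcliques n A S \<Longrightarrow> finite K"
  by (simp add: maxcliques_def clique_def)

lemma mc_card: "K \<in> maxcliques n A S \<Longrightarrow> n \<le> card K"
  by (simp add: maxcliques_def clique_def)

lemma mc_finite: "finite A \<Longrightarrow> finite (maxcliques n A S)"
  by (rule finite_subset[of _ "Pow A"]) (auto dest: mc_sub)

lemma clique_subset:
  assumes "clique n A S K" "Q \<subseteq> K" "n \<le> card Q"
  shows "clique n A S Q"
  using assms unfolding clique_def by (auto intro: finite_subset)

lemma ex_maxclique:
  assumes "finite A" "clique n A S Q"
  shows "\<exists>K\<in>maxcliques n A S. Q \<subseteq> K"
proof -
  let ?C = "{K. clique n A S K \<and> Q \<subseteq> K}"
  have fin: "finite ?C"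
    by (rule finite_subset[of _ "Pow A"]) (use assms(1) in \<open>auto simp: clique_def\<close>)
  have ne: "?C \<noteq> {}" using assms(2) by auto
  obtain K where K: "K \<in> ?C" "\<forall>b\<in>?C. K \<le> b \<longrightarrow> K = b"
    using finite_has_maximal[OF fin ne] by blast
  have "K \<in> maxcliques n A S"
    unfolding maxcliques_def using K by auto
  thus ?thesis using K by auto
qed

lemma clique_induced:
  assumes "X \<subseteq> A"
  shows "clique n X (induced S X) Q \<longleftrightarrow> clique n A S Q \<and> Q \<subseteq> X"
  using assms unfolding clique_def induced_def by (auto dest: subset_trans)

lemma rep:
  assumes fA: "finite A" and XA: "X \<subseteq> A"
    and lin: "\<And>K L. K \<in> maxcliques n A S \<Longrightarrow> L \<in> maxcliques n A S \<Longrightarrow> K \<noteq> L \<Longrightarrow> card (K \<inter> L) < n"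
  shows "delta_on n S X = FF n (maxcliques n A S) X"
proof -
  let ?K = "maxcliques n A S"
  let ?B = "{K \<in> ?K. n \<le> card (K \<inter> X)}"
  have finK: "finite ?K" using mc_finite[OF fA] .
  have cl_int: "clique n A S (K \<inter> X)" if "K \<in> ?K" "n \<le> card (K \<inter> X)" for K
    using clique_subset[OF mc_clique[OF that(1)] _ that(2)] by auto
  have eq: "maxcliques n X (induced S X) = (\<lambda>K. K \<inter> X) ` ?B"
  proof
    show "maxcliques n X (induced S X) \<subseteq> (\<lambda>K. K \<inter> X) ` ?B"
    proof
      fix M assume M: "M \<in> maxcliques n X (induced S X)"
      have cM: "clique n A S M" "M \<subseteq> X" using mc_clique[OF M] clique_induced[OF XA] by auto
      obtain K where K: "K \<in> ?K" "M \<subseteq> K" using ex_maxclique[OF fA cM(1)] by blast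
      have "card M \<le> card (K \<inter> X)"
        by (rule card_mono) (use mc_fin[OF K(1)] K cM in auto)
      moreover have "n \<le> card M" using cM(1) by (simp add: clique_def)
      ultimately have big: "n \<le> card (K \<inter> X)" by simp
      have "clique n X (induced S X) (K \<inter> X)"
        using clique_induced[OF XA] cl_int[OF K(1) big] by auto
      hence "K \<inter> X = M" using mc_max[OF M] K cM by auto
      thus "M \<in> (\<lambda>K. K \<inter> X) ` ?B" using K big by auto
    qed
  next
    show "(\<lambda>K. K \<inter> X) ` ?B \<subseteq> maxcliques n X (induced S X)"
    proof
      fix M assume "M \<in> (\<lambda>K. K \<inter> X) ` ?B"
      then obtain K where K: "K \<in> ?K" "n \<le> card (K \<inter> X)" "M = K \<inter> X" by auto
      have cM: "clique n X (induced S X) M"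
        using clique_induced[OF XA] cl_int[OF K(1,2)] K(3) by auto
      have "M' = M" if "clique n X (induced S X) M'" "M \<subseteq> M'" for M'
      proof -
        have cM': "clique n A S M'" "M' \<subseteq> X" using that(1) clique_induced[OF XA] by auto
        obtain K' where K': "K' \<in> ?K" "M' \<subseteq> K'" using ex_maxclique[OF fA cM'(1)] by blast
        have "card (K \<inter> X) \<le> card (K \<inter> K')"
          by (rule card_mono) (use mc_fin[OF K(1)] K K' that in auto)
        hence "K = K'" using lin[OF K(1) K'(1)] K(2) by linarith
        thus ?thesis using K K' cM' that by auto
      qed
      thus "M \<in> maxcliques n X (induced S X)" unfolding maxcliques_def using cM by auto
    qed
  qed
  have inj: "inj_on (\<lambda>K. K \<inter> X) ?B"
  proof (rule inj_onI)
    fix K L assume K: "K \<in> ?B" and L: "L \<in> ?B" and e: "K \<inter> X = L \<inter> X"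
    have "card (K \<inter> X) \<le> card (K \<inter> L)"
      by (rule card_mono) (use mc_fin[of K] K e in auto)
    thus "K = L" using lin[of K L] K L by (metis (no_types, lifting) mem_Collect_eq not_le le_trans)
  qed
  have "s_count n X (induced S X) = (\<Sum>K\<in>?B. starcard n (K \<inter> X))"
    unfolding s_count_def eq by (subst sum.reindex[OF inj]) simp
  also have "\<dots> = (\<Sum>K\<in>?B. gg n (card (K \<inter> X)))"
    by (simp add: starcard_gg)
  also have "\<dots> = (\<Sum>K\<in>?K. gg n (card (K \<inter> X)))"
    by (rule sum.mono_neutral_left) (use finK in \<open>auto intro: ccontr simp: gg_zero\<close>)
  finally show ?thesis unfolding delta_on_def delta_def FF_def by simp
qed



lemma FF_small:
  assumes "card Y < n" "finite Y"
  shows "FF n M Y = int (card Y)"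
proof -
  have "gg n (card (K \<inter> Y)) = 0" for K
  proof -
    have "card (K \<inter> Y) \<le> card Y"
      by (rule card_mono) (use assms in auto)
    thus ?thesis using assms by (intro gg_zero) simp
  qed
  thus ?thesis unfolding FF_def by simp
qed

locale geo =
  fixes n :: nat and A :: "'a set" and S :: "'a set set"
  assumes n1: "1 \<le> n" and fin: "finite A" and geom: "geometric n A S"
begin

abbreviation "KK \<equiv> maxcliques n A S"

lemma finKK: "finite KK" using mc_finite[OF fin] .

lemma G0:
  assumes Q: "clique n A S Q"
  shows "delta_on n S Q = int n - 1"
proof -
  have QA: "Q \<subseteq> A" using Q by (simp add: clique_def)
  have cQ: "clique n Q (induced S Q) Q" using clique_induced[OF QA] Q by auto
  have "maxcliques n Q (induced S Q) = {Q}"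
  proof
    show "maxcliques n Q (induced S Q) \<subseteq> {Q}"
    proof
      fix M assume M: "M \<in> maxcliques n Q (induced S Q)"
      have "M \<subseteq> Q" using mc_sub[OF M] .
      hence "Q = M" using mc_max[OF M cQ] by simp
      thus "M \<in> {Q}" by simp
    qed
    show "{Q} \<subseteq> maxcliques n Q (induced S Q)"
      using cQ unfolding maxcliques_def by (auto simp: clique_def)
  qed
  hence sc: "s_count n Q (induced S Q) = gg n (card Q)"
    unfolding s_count_def by (simp add: starcard_gg)
  have "n \<le> card Q" using Q by (simp add: clique_def)
  hence g: "gg n (card Q) = int (card Q) - int n + 1" by (intro gg_big) simp
  have "delta_on n S Q = int (card Q) - gg n (card Q)" unfolding delta_on_def delta_def sc by (rule refl)
  thus ?thesis using g by linarith
qed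

lemma G1:
  assumes K: "K \<in> KK" and L: "L \<in> KK" and c: "n \<le> card (K \<inter> L)"
  shows "K = L"
proof -
  have cl: "clique n A S (K \<inter> L)"
    using clique_subset[OF mc_clique[OF K] _ c] by auto
  have fi: "finite (K \<inter> L)" using mc_fin[OF K] by auto
  have "delta_on n S (K \<inter> L) < int n" using G0[OF cl] by linarith
  moreover have "K \<inter> L \<subseteq> A" using mc_sub[OF K] by auto
  ultimately have "\<exists>!M. M \<in> KK \<and> K \<inter> L \<subseteq> M"
    using c fi by (intro geom[unfolded geometric_def, rule_format]) simp
  moreover have "K \<in> KK \<and> K \<inter> L \<subseteq> K" "L \<in> KK \<and> K \<inter> L \<subseteq> L" using K L by auto
  ultimately show ?thesis by (metis (no_types, lifting))
qed

lemma lin: "K \<in> KK \<Longrightarrow> L \<in> KK \<Longrightarrow> K \<noteq> L \<Longrightarrow> card (K \<inter> L) < n"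
  using G1 by (meson not_le)

lemma repA: "X \<subseteq> A \<Longrightarrow> delta_on n S X = FF n KK X"
  using rep[OF fin] lin by blast

lemma geoF:
  assumes "X \<subseteq> A" "n \<le> card X" "FF n KK X < int n"
  shows "\<exists>!K. K \<in> KK \<and> X \<subseteq> K"
proof -
  have "delta_on n S X < int n" using repA[OF assms(1)] assms(3) by linarith
  thus ?thesis using assms finite_subset[OF assms(1) fin]
    by (intro geom[unfolded geometric_def, rule_format]) simp
qed

lemma G5:
  assumes "X \<subseteq> A" "n \<le> card X" "FF n KK X \<le> int n - 1"
  shows "\<exists>K\<in>KK. X \<subseteq> K"
proof -
  have "FF n KK X < int n" using assms(3) by linarith
  from ex1_implies_ex[OF geoF[OF assms(1,2) this]] show ?thesis by blast
qed

lemma G3: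
  assumes K: "K \<in> KK" and L: "L \<in> KK" and ne: "K \<noteq> L"
  shows "card (K \<inter> L) + 2 \<le> n"
proof (rule ccontr)
  assume "\<not> ?thesis"
  moreover have "card (K \<inter> L) < n" using lin[OF K L ne] .
  ultimately have c: "card (K \<inter> L) + 1 = n" by simp
  have fK: "finite K" "finite L" using mc_fin K L by auto
  obtain x where x: "x \<in> K" "x \<notin> L" using mc_incomp[OF K L] ne by blast
  obtain y where y: "y \<in> L" "y \<notin> K" using mc_incomp[OF L K] ne by blast
  have xy: "x \<noteq> y" using x y by auto
  define X where "X = insert x (insert y (K \<inter> L))"
  have XA: "X \<subseteq> A" using mc_sub[OF K] mc_sub[OF L] x y by (auto simp: X_def)
  have cX: "card X = n + 1" using c x y fK xy by (simp add: X_def)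
  have KX: "K \<inter> X = insert x (K \<inter> L)" using x y by (auto simp: X_def)
  have LX: "L \<inter> X = insert y (K \<inter> L)" using x y by (auto simp: X_def)
  have cKX: "card (K \<inter> X) = n" using KX x c fK by simp
  have cLX: "card (L \<inter> X) = n" using LX y c fK by simp
  have "gg n (card (K \<inter> X)) + gg n (card (L \<inter> X)) \<le> (\<Sum>M\<in>KK. gg n (card (M \<inter> X)))"
    by (rule sum_two_le[OF finKK K L ne]) (simp add: gg_nonneg)
  moreover have "gg n (card (K \<inter> X)) = 1" "gg n (card (L \<inter> X)) = 1"
    using cKX cLX by (simp_all add: gg_def)
  ultimately have "FF n KK X \<le> int n - 1" unfolding FF_def using cX by linarith
  then obtain N where N: "N \<in> KK" "X \<subseteq> N" using G5[OF XA] cX by auto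
  have "n \<le> card (N \<inter> K)"
  proof -
    have "card (K \<inter> X) \<le> card (N \<inter> K)" by (rule card_mono) (use fK N in auto)
    thus ?thesis using cKX by simp
  qed
  hence "N = K" using G1[OF N(1) K] by simp
  moreover have "y \<in> X" by (simp add: X_def)
  ultimately show False using N(2) y(2) by blast
qed

lemma G6:
  assumes K: "K \<in> KK" and Y: "Y \<subseteq> K" "n \<le> card Y"
  shows "FF n KK Y = int n - 1"
proof -
  have fK: "finite K" using mc_fin[OF K] .
  have z: "gg n (card (L \<inter> Y)) = 0" if "L \<in> KK - {K}" for L
  proof -
    have "card (L \<inter> Y) \<le> card (K \<inter> L)"
      by (rule card_mono) (use fK Y in auto)
    moreover have "card (K \<inter> L) + 2 \<le> n" using G3[OF K, of L] that by auto
    ultimately show ?thesis by (intro gg_zero) auto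
  qed
  have "(\<Sum>L\<in>KK. gg n (card (L \<inter> Y))) = gg n (card (K \<inter> Y)) + (\<Sum>L\<in>KK-{K}. gg n (card (L \<inter> Y)))"
    by (rule sum.remove[OF finKK K])
  also have "\<dots> = gg n (card Y)" using z Y by (simp add: Int_absorb1)
  moreover have "gg n (card Y) = int (card Y) - int n + 1" using Y by (intro gg_big) simp
  ultimately show ?thesis unfolding FF_def by linarith
qed

lemma G7:
  assumes "Y \<subseteq> A" "n \<le> card Y"
  shows "int n - 1 \<le> FF n KK Y"
proof (rule ccontr)
  assume h: "\<not> int n - 1 \<le> FF n KK Y"
  then obtain K where K: "K \<in> KK" "Y \<subseteq> K" using G5[OF assms] by force
  thus False using G6[OF K assms(2)] h by linarith
qed

end



definition FAM :: "nat \<Rightarrow> 'a set \<Rightarrow> 'a set set \<Rightarrow> 'a set \<Rightarrow> 'a set set \<Rightarrow> 'a set set" where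
  "FAM n A1 S1 A2 S2 = amalg_M n A1 S1 A2 S2 \<union> amalg_M1 n A1 S1 A2 S2 \<union> amalg_M1 n A2 S2 A1 S1"

definition psi :: "nat \<Rightarrow> 'a set \<Rightarrow> 'a set set \<Rightarrow> 'a set \<Rightarrow> 'a set" where
  "psi n A2 S2 K1 = K1 \<union> \<Union>{K2 \<in> maxcliques n A2 S2. n \<le> card (K1 \<inter> K2) + 1}"

lemma int_cond1: "(int n - 1 \<le> int c) = (n \<le> c + 1)" by linarith
lemma int_cond2: "(int c < int n - 1) = (\<not> n \<le> c + 1)" by linarith

lemma mem_M1: "K \<in> amalg_M1 n A1 S1 A2 S2 \<longleftrightarrow>
   K \<in> maxcliques n A1 S1 \<and> (\<forall>L\<in>maxcliques n A2 S2. \<not> n \<le> card (K \<inter> L) + 1)"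
  unfolding amalg_M1_def int_cond2 by blast

lemma mem_M: "V \<in> amalg_M n A1 S1 A2 S2 \<longleftrightarrow>
   (\<exists>K1 K2. V = K1 \<union> K2 \<and> K1 \<in> maxcliques n A1 S1 \<and> K2 \<in> maxcliques n A2 S2 \<and> n \<le> card (K1 \<inter> K2) + 1)"
  unfolding amalg_M_def int_cond1 by blast

lemma amalg_M_sym: "amalg_M n A1 S1 A2 S2 = amalg_M n A2 S2 A1 S1"
proof (rule set_eqI)
  fix V
  show "V \<in> amalg_M n A1 S1 A2 S2 \<longleftrightarrow> V \<in> amalg_M n A2 S2 A1 S1"
    unfolding mem_M
  proof
    assume "\<exists>K1 K2. V = K1 \<union> K2 \<and> K1 \<in> maxcliques n A1 S1 \<and> K2 \<in> maxcliques n A2 S2 \<and> n \<le> card (K1 \<inter> K2) + 1"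
    then obtain K1 K2 where "V = K1 \<union> K2" "K1 \<in> maxcliques n A1 S1" "K2 \<in> maxcliques n A2 S2" "n \<le> card (K1 \<inter> K2) + 1" by blast
    thus "\<exists>K1 K2. V = K1 \<union> K2 \<and> K1 \<in> maxcliques n A2 S2 \<and> K2 \<in> maxcliques n A1 S1 \<and> n \<le> card (K1 \<inter> K2) + 1"
      by (intro exI[of _ K2] exI[of _ K1]) (simp add: Un_commute Int_commute)
  next
    assume "\<exists>K1 K2. V = K1 \<union> K2 \<and> K1 \<in> maxcliques n A2 S2 \<and> K2 \<in> maxcliques n A1 S1 \<and> n \<le> card (K1 \<inter> K2) + 1"
    then obtain K1 K2 where "V = K1 \<union> K2" "K1 \<in> maxcliques n A2 S2" "K2 \<in> maxcliques n A1 S1" "n \<le> card (K1 \<inter> K2) + 1" by blast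
    thus "\<exists>K1 K2. V = K1 \<union> K2 \<and> K1 \<in> maxcliques n A1 S1 \<and> K2 \<in> maxcliques n A2 S2 \<and> n \<le> card (K1 \<inter> K2) + 1"
      by (intro exI[of _ K2] exI[of _ K1]) (simp add: Un_commute Int_commute)
  qed
qed

lemma FAM_sym: "FAM n A1 S1 A2 S2 = FAM n A2 S2 A1 S1"
  unfolding FAM_def using amalg_M_sym by blast

locale amal =
  fixes n :: nat and A1 A2 :: "'a set" and S1 S2 :: "'a set set"
  assumes n1: "1 \<le> n" and f1: "finite A1" and f2: "finite A2"
    and g1: "geometric n A1 S1" and g2: "geometric n A2 S2"
    and ind: "induced S1 (A1 \<inter> A2) = induced S2 (A1 \<inter> A2)"
begin

sublocale geo1: geo n A1 S1 using n1 f1 g1 by unfold_locales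
sublocale geo2: geo n A2 S2 using n1 f2 g2 by unfold_locales

abbreviation "M1 \<equiv> maxcliques n A1 S1"
abbreviation "M2 \<equiv> maxcliques n A2 S2"
abbreviation "U1 \<equiv> amalg_M1 n A1 S1 A2 S2"
abbreviation "U2 \<equiv> amalg_M1 n A2 S2 A1 S1"
abbreviation "MM \<equiv> amalg_M n A1 S1 A2 S2"
abbreviation "FA \<equiv> FAM n A1 S1 A2 S2"
abbreviation "ps \<equiv> psi n A2 S2"

lemma amal_sym: "amal n A2 A1 S2 S1"
  using n1 f1 f2 g1 g2 ind by unfold_locales (auto simp: Int_commute)

lemma cl12:
  assumes "Q \<subseteq> A2" "clique n A1 S1 Q"
  shows "clique n A2 S2 Q"
proof -
  have QB: "Q \<subseteq> A1 \<inter> A2" using assms by (auto simp: clique_def)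
  have "e \<in> S2" if "e \<subseteq> Q" "card e = n" for e
  proof -
    have "e \<in> S1" using assms(2) that by (auto simp: clique_def)
    hence "e \<in> induced S1 (A1 \<inter> A2)" using that QB by (auto simp: induced_def)
    hence "e \<in> induced S2 (A1 \<inter> A2)" using ind by simp
    thus ?thesis by (simp add: induced_def)
  qed
  moreover have "finite Q" "n \<le> card Q" using assms(2) by (simp_all add: clique_def)
  ultimately show ?thesis using assms(1) unfolding clique_def by blast
qed

lemma F1a:
  assumes K1: "K1 \<in> M1" and K2: "K2 \<in> M2" and m: "n \<le> card (K1 \<inter> K2) + 1"
  shows "K1 \<inter> A2 \<subseteq> K2"
proof (cases "n \<le> card (K1 \<inter> A2)")
  case True
  have "clique n A1 S1 (K1 \<inter> A2)" using clique_subset[OF mc_clique[OF K1] _ True] by auto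
  hence "clique n A2 S2 (K1 \<inter> A2)" by (intro cl12) auto
  then obtain K2' where K2': "K2' \<in> M2" "K1 \<inter> A2 \<subseteq> K2'" using ex_maxclique[OF f2] by blast
  have sub: "K1 \<inter> K2 \<subseteq> K2' \<inter> K2" using K2' mc_sub[OF K2] by auto
  have "card (K1 \<inter> K2) \<le> card (K2' \<inter> K2)"
    by (rule card_mono[OF _ sub]) (use mc_fin[OF K2] in auto)
  have "K2' = K2"
  proof (rule ccontr)
    assume "K2' \<noteq> K2"
    from geo2.G3[OF K2'(1) K2 this] have "card (K2' \<inter> K2) + 2 \<le> n" .
    thus False using m \<open>card (K1 \<inter> K2) \<le> card (K2' \<inter> K2)\<close> by linarith
  qed
  thus ?thesis using K2' by simp
next
  case False
  have fin: "finite (K1 \<inter> A2)" using mc_fin[OF K1] by auto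
  have sub: "K1 \<inter> K2 \<subseteq> K1 \<inter> A2" using mc_sub[OF K2] by auto
  have "card (K1 \<inter> K2) \<le> card (K1 \<inter> A2)" by (rule card_mono[OF fin sub])
  hence "card (K1 \<inter> K2) = card (K1 \<inter> A2)" using False m by linarith
  hence "K1 \<inter> K2 = K1 \<inter> A2" using card_subset_eq[OF fin sub] by simp
  thus ?thesis by auto
qed

lemma F1:
  assumes K1: "K1 \<in> M1" and K2: "K2 \<in> M2" and m: "n \<le> card (K1 \<inter> K2) + 1"
  shows "K1 \<inter> A2 = K1 \<inter> K2" "K2 \<inter> A1 = K1 \<inter> K2"
proof -
  show "K1 \<inter> A2 = K1 \<inter> K2" using F1a[OF assms] mc_sub[OF K2] by auto
  have "K2 \<inter> A1 \<subseteq> K1" using amal.F1a[OF amal_sym K2 K1] m by (simp add: Int_commute)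
  thus "K2 \<inter> A1 = K1 \<inter> K2" using mc_sub[OF K1] by auto
qed

lemma F2:
  assumes K1: "K1 \<in> M1" and K2: "K2 \<in> M2" and K2': "K2' \<in> M2"
    and m: "n \<le> card (K1 \<inter> K2) + 1" and m': "n \<le> card (K1 \<inter> K2') + 1"
  shows "K2 = K2'"
proof (rule ccontr)
  assume ne: "K2 \<noteq> K2'"
  have "K1 \<inter> K2 \<subseteq> K2 \<inter> K2'" using F1a[OF K1 K2' m'] mc_sub[OF K2] by auto
  hence "card (K1 \<inter> K2) \<le> card (K2 \<inter> K2')"
    by (intro card_mono) (use mc_fin[OF K2] in auto)
  thus False using geo2.G3[OF K2 K2' ne] m by linarith
qed

lemma F2':
  assumes K1: "K1 \<in> M1" and K1': "K1' \<in> M1" and K2: "K2 \<in> M2"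
    and m: "n \<le> card (K1 \<inter> K2) + 1" and m': "n \<le> card (K1' \<inter> K2) + 1"
  shows "K1 = K1'"
  using amal.F2[OF amal_sym K2 K1 K1'] m m' by (simp add: Int_commute)

lemma F3:
  assumes K1: "K1 \<in> M1" and c: "n \<le> card (K1 \<inter> A2)"
  shows "\<exists>K2\<in>M2. n \<le> card (K1 \<inter> K2)"
proof -
  have "clique n A1 S1 (K1 \<inter> A2)" using clique_subset[OF mc_clique[OF K1] _ c] by auto
  hence "clique n A2 S2 (K1 \<inter> A2)" by (intro cl12) auto
  then obtain K2 where K2: "K2 \<in> M2" "K1 \<inter> A2 \<subseteq> K2" using ex_maxclique[OF f2] by blast
  have "card (K1 \<inter> A2) \<le> card (K1 \<inter> K2)"
    by (rule card_mono) (use mc_fin[OF K2(1)] K2 in auto)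
  thus ?thesis using K2(1) le_trans[OF c] by blast
qed

lemma U1_small:
  assumes K1: "K1 \<in> U1" shows "card (K1 \<inter> A2) < n"
proof (rule ccontr)
  assume "\<not> card (K1 \<inter> A2) < n"
  hence "n \<le> card (K1 \<inter> A2)" by simp
  moreover have K1': "K1 \<in> M1" "\<forall>L\<in>M2. \<not> n \<le> card (K1 \<inter> L) + 1" using K1 unfolding mem_M1 by auto
  ultimately obtain K2 where "K2 \<in> M2" "n \<le> card (K1 \<inter> K2)" using F3 by blast
  thus False using K1'(2) by force
qed

lemma U2_small: "K2 \<in> U2 \<Longrightarrow> card (K2 \<inter> A1) < n"
  using amal.U1_small[OF amal_sym] .

lemma psi_matched:
  assumes K1: "K1 \<in> M1" and K2: "K2 \<in> M2" and m: "n \<le> card (K1 \<inter> K2) + 1"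
  shows "ps K1 = K1 \<union> K2"
proof -
  have "{K2' \<in> M2. n \<le> card (K1 \<inter> K2') + 1} = {K2}"
  proof (intro equalityI subsetI)
    fix x assume "x \<in> {K2' \<in> M2. n \<le> card (K1 \<inter> K2') + 1}"
    hence "x \<in> M2" "n \<le> card (K1 \<inter> x) + 1" by auto
    thus "x \<in> {K2}" using F2[OF K1 K2 _ m] by blast
  next
    fix x assume "x \<in> {K2}" thus "x \<in> {K2' \<in> M2. n \<le> card (K1 \<inter> K2') + 1}" using K2 m by simp
  qed
  note e = this
  show ?thesis unfolding psi_def e by simp
qed

lemma psi_un:
  assumes "\<forall>K2\<in>M2. \<not> n \<le> card (K1 \<inter> K2) + 1"
  shows "ps K1 = K1"
proof -
  have e: "{K2 \<in> M2. n \<le> card (K1 \<inter> K2) + 1} = {}" using assms by blast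
  show ?thesis unfolding psi_def e by simp
qed

lemma psi_A1:
  assumes K1: "K1 \<in> M1"
  shows "ps K1 \<inter> A1 = K1"
proof (cases "\<exists>K2\<in>M2. n \<le> card (K1 \<inter> K2) + 1")
  case True
  then obtain K2 where K2: "K2 \<in> M2" "n \<le> card (K1 \<inter> K2) + 1" by blast
  show ?thesis using psi_matched[OF K1 K2] F1(2)[OF K1 K2] mc_sub[OF K1] by auto
next
  case False thus ?thesis using psi_un mc_sub[OF K1] by auto
qed

lemma psi_sup: "K1 \<subseteq> ps K1" unfolding psi_def by auto

lemma psi_img: "ps ` M1 = MM \<union> U1"
proof
  show "ps ` M1 \<subseteq> MM \<union> U1"
  proof
    fix V assume "V \<in> ps ` M1"
    then obtain K1 where K1: "K1 \<in> M1" "V = ps K1" by auto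
    show "V \<in> MM \<union> U1"
    proof (cases "\<exists>K2\<in>M2. n \<le> card (K1 \<inter> K2) + 1")
      case True
      then obtain K2 where K2: "K2 \<in> M2" "n \<le> card (K1 \<inter> K2) + 1" by blast
      have "V \<in> MM" unfolding mem_M using psi_matched[OF K1(1) K2] K1 K2 by blast
      thus ?thesis by blast
    next
      case False
      have "V \<in> U1" unfolding mem_M1 using False psi_un K1 by auto
      thus ?thesis by blast
    qed
  qed
next
  show "MM \<union> U1 \<subseteq> ps ` M1"
  proof
    fix V assume "V \<in> MM \<union> U1"
    thus "V \<in> ps ` M1"
    proof
      assume "V \<in> MM"
      then obtain K1 K2 where K: "V = K1 \<union> K2" "K1 \<in> M1" "K2 \<in> M2" "n \<le> card (K1 \<inter> K2) + 1"
        unfolding mem_M by blast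
      thus ?thesis using psi_matched[OF K(2-4)] by auto
    next
      assume "V \<in> U1"
      thus ?thesis using psi_un unfolding mem_M1 by (metis image_eqI)
    qed
  qed
qed

lemma psi_inj: "inj_on ps M1"
  by (rule inj_onI) (metis psi_A1)

lemma psi_U2_disj: "ps ` M1 \<inter> U2 = {}"
proof (rule ccontr)
  assume "ps ` M1 \<inter> U2 \<noteq> {}"
  then obtain K1 where K1: "K1 \<in> M1" "ps K1 \<in> U2" by auto
  have "ps K1 \<inter> K1 = K1" using psi_sup by auto
  hence "n \<le> card (ps K1 \<inter> K1) + 1" using mc_card[OF K1(1)] by simp
  thus False using K1 unfolding mem_M1 by blast
qed

lemma FA_eq: "FA = ps ` M1 \<union> U2"
  unfolding FAM_def psi_img by blast

lemma U2_sub: "U2 \<subseteq> M2" unfolding amalg_M1_def by auto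
lemma U1_sub: "U1 \<subseteq> M1" unfolding amalg_M1_def by auto

lemma finU2: "finite U2" using finite_subset[OF U2_sub geo2.finKK] .

lemma SUMDEC: "sum h FA = (\<Sum>K1\<in>M1. h (ps K1)) + sum h U2"
proof -
  have "sum h FA = sum h (ps ` M1) + sum h U2"
    unfolding FA_eq by (rule sum.union_disjoint) (use geo1.finKK finU2 psi_U2_disj in auto)
  also have "sum h (ps ` M1) = (\<Sum>K1\<in>M1. h (ps K1))"
    by (rule sum.reindex[OF psi_inj, simplified comp_def])
  finally show ?thesis .
qed

lemma FF_dec: "FF n FA X = int (card X) - (\<Sum>K1\<in>M1. gg n (card (ps K1 \<inter> X)))
    - (\<Sum>K2\<in>U2. gg n (card (K2 \<inter> X)))"
  unfolding FF_def SUMDEC by simp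

lemma Res1:
  assumes Y: "Y \<subseteq> A1"
  shows "FF n FA Y = FF n M1 Y"
proof -
  have a: "(\<Sum>K1\<in>M1. gg n (card (ps K1 \<inter> Y))) = (\<Sum>K1\<in>M1. gg n (card (K1 \<inter> Y)))"
  proof (rule sum.cong[OF refl])
    fix K1 assume K1: "K1 \<in> M1"
    have "ps K1 \<inter> Y = ps K1 \<inter> A1 \<inter> Y" using Y by auto
    thus "gg n (card (ps K1 \<inter> Y)) = gg n (card (K1 \<inter> Y))" using psi_A1[OF K1] by simp
  qed
  have b: "(\<Sum>K2\<in>U2. gg n (card (K2 \<inter> Y))) = 0"
  proof (rule sum.neutral, rule ballI)
    fix K2 assume K2: "K2 \<in> U2"
    have "finite K2" using mc_fin U2_sub K2 by blast
    hence "card (K2 \<inter> Y) \<le> card (K2 \<inter> A1)"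
      by (intro card_mono) (use Y in auto)
    thus "gg n (card (K2 \<inter> Y)) = 0" using U2_small[OF K2] by (intro gg_zero) simp
  qed
  show ?thesis unfolding FF_dec a b unfolding FF_def by simp
qed

lemma Res2:
  assumes Y: "Y \<subseteq> A2"
  shows "FF n FA Y = FF n M2 Y"
  using amal.Res1[OF amal_sym Y] FAM_sym by metis

lemma psi_fin: "K1 \<in> M1 \<Longrightarrow> finite (ps K1)"
  unfolding psi_def using mc_fin geo2.finKK by auto

lemma psi_sub: "K1 \<in> M1 \<Longrightarrow> ps K1 \<subseteq> A1 \<union> A2"
  unfolding psi_def using mc_sub by blast

lemma FA_props0:
  assumes "V \<in> FA"
  shows "finite V \<and> V \<subseteq> A1 \<union> A2 \<and> n \<le> card V"
proof -
  have "(\<exists>K1\<in>M1. V = ps K1) \<or> V \<in> U2" using assms FA_eq by auto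
  thus ?thesis
  proof
    assume "\<exists>K1\<in>M1. V = ps K1"
    then obtain K1 where K1: "K1 \<in> M1" "V = ps K1" by blast
    have "card K1 \<le> card V" by (rule card_mono) (use K1 psi_fin psi_sup in auto)
    thus ?thesis using mc_card[OF K1(1)] K1 psi_fin psi_sub by auto
  next
    assume "V \<in> U2"
    hence "V \<in> M2" using U2_sub by auto
    thus ?thesis using mc_fin mc_sub mc_card by blast
  qed
qed

lemma FA_props:
  assumes "V \<in> FA"
  shows "finite V" "V \<subseteq> A1 \<union> A2" "n \<le> card V"
  using FA_props0[OF assms] by auto

lemma finFA: "finite FA"
  by (rule finite_subset[of _ "Pow (A1 \<union> A2)"]) (use FA_props f1 f2 in auto)

lemma psi_A2_un:
  assumes K1: "K1 \<in> M1" and K2: "K2 \<in> U2" and sub: "K2 \<subseteq> ps K1"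
  shows False
proof (cases "\<exists>K2'\<in>M2. n \<le> card (K1 \<inter> K2') + 1")
  case True
  then obtain K2' where K2': "K2' \<in> M2" "n \<le> card (K1 \<inter> K2') + 1" by blast
  have "K2 \<subseteq> K2'" using sub psi_matched[OF K1 K2'] F1a[OF K1 K2'] U2_sub K2 mc_sub by blast
  hence "K2 = K2'" using mc_incomp U2_sub K2 K2' by blast
  thus False using K2 K1 K2'(2) unfolding mem_M1 by (metis Int_commute)
next
  case False
  hence "K2 \<subseteq> K1" using sub psi_un by auto
  hence "K2 \<inter> K1 = K2" by auto
  hence "n \<le> card (K2 \<inter> K1) + 1" using mc_card U2_sub K2 by (metis le_add1 le_trans subsetD)
  thus False using K2 K1 unfolding mem_M1 by blast
qed

lemma FA_incomp:
  assumes V: "V \<in> FA" and V': "V' \<in> FA" and sub: "V \<subseteq> V'"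
  shows "V = V'"
proof -
  have cV: "(\<exists>K1\<in>M1. V = ps K1) \<or> V \<in> U2" using V FA_eq by auto
  have cV': "(\<exists>K1\<in>M1. V' = ps K1) \<or> V' \<in> U2" using V' FA_eq by auto
  show ?thesis
  proof (cases "V \<in> U2")
    case True
    show ?thesis
    proof (cases "V' \<in> U2")
      case True thus ?thesis using \<open>V \<in> U2\<close> sub mc_incomp U2_sub by blast
    next
      case False
      then obtain K1 where "K1 \<in> M1" "V' = ps K1" using cV' by auto
      thus ?thesis using psi_A2_un \<open>V \<in> U2\<close> sub by blast
    qed
  next
    case False
    then obtain K1 where K1: "K1 \<in> M1" "V = ps K1" using cV by auto
    show ?thesis
    proof (cases "V' \<in> U2")
      case True
      have "K1 \<subseteq> V'" using K1 psi_sup sub by blast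
      hence "V' \<inter> K1 = K1" by auto
      hence "n \<le> card (V' \<inter> K1) + 1" using mc_card[OF K1(1)] by simp
      thus ?thesis using True K1 unfolding mem_M1 by blast
    next
      case False
      then obtain K1' where K1': "K1' \<in> M1" "V' = ps K1'" using cV' by auto
      have "K1 \<subseteq> K1'" using sub K1 K1' psi_A1 by blast
      hence "K1 = K1'" using mc_incomp K1 K1' by blast
      thus ?thesis using K1 K1' by simp
    qed
  qed
qed

end



lemma add_big:
  assumes fF: "finite F" and V: "V \<in> F" and fV: "finite V" and fX: "finite X"
    and big: "n \<le> card (V \<inter> X)"
  shows "FF n F (X \<union> V) \<le> FF n F X"
proof -
  let ?d = "\<lambda>K. gg n (card (K \<inter> (X \<union> V))) - gg n (card (K \<inter> X))"
  have dnn: "0 \<le> ?d K" for K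
  proof -
    have "card (K \<inter> X) \<le> card (K \<inter> (X \<union> V))"
      by (rule card_mono) (use fX fV in auto)
    thus ?thesis using gg_mono by simp
  qed
  have "?d V \<le> sum ?d F" by (rule sum_one_le[OF fF V dnn])
  moreover have "V \<inter> (X \<union> V) = V" by auto
  moreover have "card (V \<inter> X) \<le> card V" by (rule card_mono[OF fV]) auto
  moreover have "gg n (card V) = int (card V) - int n + 1" using big \<open>card (V \<inter> X) \<le> card V\<close>
    by (intro gg_big) simp
  moreover have "gg n (card (V \<inter> X)) = int (card (V \<inter> X)) - int n + 1" using big by (intro gg_big) simp
  ultimately have d: "int (card V) - int (card (V \<inter> X)) \<le> sum ?d F" by simp
  have cu: "card (X \<union> V) = card X + card V - card (V \<inter> X)"
    using card_Un_Int[OF fX fV] by (simp add: Int_commute)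
  have "card (V \<inter> X) \<le> card V" by (rule card_mono[OF fV]) auto
  hence cu': "int (card (X \<union> V)) = int (card X) + int (card V) - int (card (V \<inter> X))"
    using cu by simp
  have "sum ?d F = (\<Sum>K\<in>F. gg n (card (K \<inter> (X \<union> V)))) - (\<Sum>K\<in>F. gg n (card (K \<inter> X)))"
    by (rule sum_subtractf)
  thus ?thesis unfolding FF_def using d cu' by linarith
qed

locale amal_str = amal +
  assumes strong: "strong_sub n (A1 \<inter> A2) A1 S1"
begin

definition tm :: "'a set \<Rightarrow> 'a set \<Rightarrow> int" where
  "tm X K1 = gg n (card (ps K1 \<inter> X)) - gg n (card (ps K1 \<inter> (X \<inter> A2)))"

definition ic :: "'a set \<Rightarrow> 'a set \<Rightarrow> int" where
  "ic X K1 = gg n (card (K1 \<inter> A2) + card (K1 \<inter> (X - A2))) - gg n (card (K1 \<inter> A2))"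

lemma Delta_W:
  assumes XA: "X \<subseteq> A1 \<union> A2"
  shows "0 \<le> int (card (X - A2)) - (\<Sum>K1\<in>M1. ic X K1)"
proof -
  let ?B = "A1 \<inter> A2" and ?W = "X - A2"
  have WA: "?W \<subseteq> A1" using XA by auto
  have fW: "finite ?W" using finite_subset[OF WA f1] .
  have fB: "finite ?B" using f1 by auto
  have sBW: "?B \<subseteq> ?B \<union> ?W" "?B \<union> ?W \<subseteq> A1" "finite (?B \<union> ?W)" using WA fW fB by auto
  have "delta_on n S1 (?B \<union> ?W) - delta_on n S1 ?B \<ge> 0"
    using strong sBW unfolding strong_sub_def by blast
  hence ge: "FF n M1 (?B \<union> ?W) - FF n M1 ?B \<ge> 0"
    using geo1.repA[OF sBW(2)] geo1.repA[of ?B] by auto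
  have cBW: "card (?B \<union> ?W) = card ?B + card ?W"
    by (rule card_Un_disjoint[OF fB fW]) auto
  have cK: "card (K1 \<inter> (?B \<union> ?W)) = card (K1 \<inter> A2) + card (K1 \<inter> ?W)" if K1: "K1 \<in> M1" for K1
  proof -
    have fK: "finite K1" using mc_fin[OF K1] .
    have "K1 \<inter> (?B \<union> ?W) = (K1 \<inter> A2) \<union> (K1 \<inter> ?W)" using mc_sub[OF K1] by auto
    moreover have "card ((K1 \<inter> A2) \<union> (K1 \<inter> ?W)) = card (K1 \<inter> A2) + card (K1 \<inter> ?W)"
      by (rule card_Un_disjoint) (use fK in auto)
    ultimately show ?thesis by simp
  qed
  have cKB: "K1 \<inter> ?B = K1 \<inter> A2" if K1: "K1 \<in> M1" for K1 using mc_sub[OF K1] by auto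
  have "(\<Sum>K1\<in>M1. ic X K1) = (\<Sum>K1\<in>M1. gg n (card (K1 \<inter> (?B \<union> ?W))) - gg n (card (K1 \<inter> ?B)))"
    by (rule sum.cong[OF refl]) (simp add: ic_def cK cKB)
  also have "\<dots> = (\<Sum>K1\<in>M1. gg n (card (K1 \<inter> (?B \<union> ?W)))) - (\<Sum>K1\<in>M1. gg n (card (K1 \<inter> ?B)))"
    by (rule sum_subtractf)
  finally have e: "(\<Sum>K1\<in>M1. ic X K1) = (\<Sum>K1\<in>M1. gg n (card (K1 \<inter> (?B \<union> ?W)))) - (\<Sum>K1\<in>M1. gg n (card (K1 \<inter> ?B)))" .
  show ?thesis using ge e cBW unfolding FF_def by linarith
qed

lemma card_psX:
  assumes K1: "K1 \<in> M1" and XA: "X \<subseteq> A1 \<union> A2"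
  shows "card (ps K1 \<inter> X) = card (ps K1 \<inter> (X \<inter> A2)) + card (K1 \<inter> (X - A2))"
proof -
  have fp: "finite (ps K1)" using psi_fin[OF K1] .
  have "ps K1 \<inter> (X - A2) = ps K1 \<inter> A1 \<inter> (X - A2)" using XA by auto
  hence e: "ps K1 \<inter> (X - A2) = K1 \<inter> (X - A2)" using psi_A1[OF K1] by simp
  have "ps K1 \<inter> X = (ps K1 \<inter> (X \<inter> A2)) \<union> (ps K1 \<inter> (X - A2))" by auto
  moreover have "card ((ps K1 \<inter> (X \<inter> A2)) \<union> (ps K1 \<inter> (X - A2))) =
      card (ps K1 \<inter> (X \<inter> A2)) + card (ps K1 \<inter> (X - A2))"
    by (rule card_Un_disjoint) (use fp in auto)
  ultimately show ?thesis using e by simp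
qed

lemma i1:
  assumes XA: "X \<subseteq> A1 \<union> A2"
  shows "FF n FA X - FF n FA (X \<inter> A2) = int (card (X - A2)) - (\<Sum>K1\<in>M1. tm X K1)"
proof -
  have fX: "finite X" using finite_subset[OF XA] f1 f2 by auto
  have cX: "card X = card (X \<inter> A2) + card (X - A2)"
  proof -
    have "X = (X \<inter> A2) \<union> (X - A2)" by auto
    moreover have "card ((X \<inter> A2) \<union> (X - A2)) = card (X \<inter> A2) + card (X - A2)"
      by (rule card_Un_disjoint) (use fX in auto)
    ultimately show ?thesis by simp
  qed
  have u: "(\<Sum>K2\<in>U2. gg n (card (K2 \<inter> X))) = (\<Sum>K2\<in>U2. gg n (card (K2 \<inter> (X \<inter> A2))))"
  proof (rule sum.cong[OF refl])
    fix K2 assume "K2 \<in> U2"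
    hence "K2 \<subseteq> A2" using U2_sub mc_sub by blast
    hence "K2 \<inter> X = K2 \<inter> (X \<inter> A2)" by auto
    thus "gg n (card (K2 \<inter> X)) = gg n (card (K2 \<inter> (X \<inter> A2)))" by simp
  qed
  have t: "(\<Sum>K1\<in>M1. tm X K1) = (\<Sum>K1\<in>M1. gg n (card (ps K1 \<inter> X))) - (\<Sum>K1\<in>M1. gg n (card (ps K1 \<inter> (X \<inter> A2))))"
    unfolding tm_def by (rule sum_subtractf)
  show ?thesis unfolding FF_dec[of X] FF_dec[of "X \<inter> A2"] u t cX by simp
qed

lemma tm_le:
  assumes K1: "K1 \<in> M1" and XA: "X \<subseteq> A1 \<union> A2"
  shows "tm X K1 \<le> ic X K1"
proof (cases "\<exists>K2\<in>M2. n \<le> card (K1 \<inter> K2) + 1")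
  case True
  then obtain K2 where K2: "K2 \<in> M2" "n \<le> card (K1 \<inter> K2) + 1" by blast
  have b: "n \<le> card (K1 \<inter> A2) + 1" using F1(1)[OF K1 K2] K2 by simp
  have "ic X K1 = int (card (K1 \<inter> (X - A2)))"
    unfolding ic_def using b by (simp add: gg_big)
  moreover have "tm X K1 \<le> int (card (K1 \<inter> (X - A2)))"
    unfolding tm_def card_psX[OF K1 XA] by (rule gg_lip)
  ultimately show ?thesis by simp
next
  case False
  hence p: "ps K1 = K1" using psi_un by auto
  have "card (K1 \<inter> (X \<inter> A2)) \<le> card (K1 \<inter> A2)"
    by (rule card_mono) (use mc_fin[OF K1] in auto)
  thus ?thesis unfolding tm_def ic_def card_psX[OF K1 XA] unfolding p by (rule gg_conv)
qed

lemma gapsum: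
  assumes XA: "X \<subseteq> A1 \<union> A2"
  shows "(\<Sum>K1\<in>M1. ic X K1 - tm X K1) \<le> FF n FA X - FF n FA (X \<inter> A2)"
proof -
  have "(\<Sum>K1\<in>M1. ic X K1 - tm X K1) = (\<Sum>K1\<in>M1. ic X K1) - (\<Sum>K1\<in>M1. tm X K1)"
    by (rule sum_subtractf)
  thus ?thesis using i1[OF XA] Delta_W[OF XA] by linarith
qed

lemma mono2:
  assumes XA: "X \<subseteq> A1 \<union> A2"
  shows "FF n FA (X \<inter> A2) \<le> FF n FA X"
proof -
  have "0 \<le> (\<Sum>K1\<in>M1. ic X K1 - tm X K1)"
    by (rule sum_nonneg) (use tm_le[OF _ XA] in auto)
  thus ?thesis using gapsum[OF XA] by linarith
qed

lemma gap1:
  assumes XA: "X \<subseteq> A1 \<union> A2" and K1: "K1 \<in> M1"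
  shows "ic X K1 - tm X K1 \<le> FF n FA X - FF n FA (X \<inter> A2)"
proof -
  have "ic X K1 - tm X K1 \<le> (\<Sum>K1\<in>M1. ic X K1 - tm X K1)"
    by (rule sum_one_le[OF geo1.finKK K1]) (use tm_le[OF _ XA] in auto)
  thus ?thesis using gapsum[OF XA] by linarith
qed

end



context amal_str
begin

lemma otherW:
  assumes K2: "K2 \<in> M2" and sub: "K2 \<subseteq> X" and XA: "X \<subseteq> A1 \<union> A2"
    and X2: "X \<inter> A2 = K2" and F: "FF n FA X \<le> int n - 1"
    and K1: "K1 \<in> M1" and K2': "K2' \<in> M2" and m: "n \<le> card (K1 \<inter> K2') + 1" and ne: "K2' \<noteq> K2"
  shows "K1 \<inter> (X - A2) = {}"
proof (rule ccontr)
  assume h: "K1 \<inter> (X - A2) \<noteq> {}"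
  have fX: "finite X" using finite_subset[OF XA] f1 f2 by auto
  have w1: "1 \<le> card (K1 \<inter> (X - A2))" using h fX by (simp add: Suc_le_eq card_gt_0_iff)
  have p: "ps K1 = K1 \<union> K2'" using psi_matched[OF K1 K2' m] .
  have s_sub: "ps K1 \<inter> (X \<inter> A2) \<subseteq> K2' \<inter> K2"
    using p X2 F1a[OF K1 K2' m] by auto
  have "card (ps K1 \<inter> (X \<inter> A2)) \<le> card (K2' \<inter> K2)"
    by (rule card_mono[OF _ s_sub]) (use mc_fin[OF K2] in auto)
  hence s2: "card (ps K1 \<inter> (X \<inter> A2)) + 2 \<le> n" using geo2.G3[OF K2' K2 ne] by linarith
  have "tm X K1 \<le> int (card (K1 \<inter> (X - A2))) - 1"
    unfolding tm_def card_psX[OF K1 XA]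
    using gg_small[OF s2 w1] gg_zero[of "card (ps K1 \<inter> (X \<inter> A2))" n] s2 by linarith
  moreover have "ic X K1 = int (card (K1 \<inter> (X - A2)))"
  proof -
    have "n \<le> card (K1 \<inter> A2) + 1" using F1(1)[OF K1 K2' m] m by simp
    thus ?thesis unfolding ic_def by (simp add: gg_big)
  qed
  ultimately have "1 \<le> FF n FA X - FF n FA (X \<inter> A2)" using gap1[OF XA K1] by linarith
  moreover have "FF n FA (X \<inter> A2) = int n - 1"
    using Res2[of "X \<inter> A2"] X2 geo2.G6[OF K2 subset_refl mc_card[OF K2]] mc_sub[OF K2] by simp
  ultimately show False using F by linarith
qed

lemma termwise:
  assumes K2: "K2 \<in> M2" and XA: "X \<subseteq> A1 \<union> A2"
    and X2: "X \<inter> A2 = K2" and F: "FF n FA X \<le> int n - 1"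
    and K1: "K1 \<in> M1" and nm: "\<not> n \<le> card (K1 \<inter> K2) + 1"
  shows "gg n (card (ps K1 \<inter> X)) = gg n (card (K1 \<inter> ((K2 \<inter> A1) \<union> (X - A2))))"
proof (cases "\<exists>K2'\<in>M2. n \<le> card (K1 \<inter> K2') + 1")
  case True
  then obtain K2' where K2': "K2' \<in> M2" "n \<le> card (K1 \<inter> K2') + 1" by blast
  have ne: "K2' \<noteq> K2" using nm K2' by auto
  have sub: "K2 \<subseteq> X" using X2 by auto
  have W0: "K1 \<inter> (X - A2) = {}" using otherW[OF K2 sub XA X2 F K1 K2'(1,2) ne] .
  have p: "ps K1 = K1 \<union> K2'" using psi_matched[OF K1 K2'] .
  have F1': "K1 \<inter> A2 \<subseteq> K2'" using F1a[OF K1 K2'] .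
  have K2'A: "K2' \<subseteq> A2" using mc_sub[OF K2'(1)] .
  have fin: "finite (K2' \<inter> K2)" using mc_fin[OF K2] by auto
  have s1: "ps K1 \<inter> X \<subseteq> K2' \<inter> K2"
  proof
    fix x assume x: "x \<in> ps K1 \<inter> X"
    show "x \<in> K2' \<inter> K2"
    proof (cases "x \<in> A2")
      case True thus ?thesis using x X2 p F1' by auto
    next
      case False thus ?thesis using x W0 p K2'A by auto
    qed
  qed
  have s2: "K1 \<inter> ((K2 \<inter> A1) \<union> (X - A2)) \<subseteq> K2' \<inter> K2"
    using W0 F1' mc_sub[OF K2] by auto
  have c: "card (K2' \<inter> K2) + 2 \<le> n" using geo2.G3[OF K2'(1) K2 ne] .
  have "card (ps K1 \<inter> X) \<le> card (K2' \<inter> K2)" by (rule card_mono[OF fin s1])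
  moreover have "card (K1 \<inter> ((K2 \<inter> A1) \<union> (X - A2))) \<le> card (K2' \<inter> K2)" by (rule card_mono[OF fin s2])
  ultimately show ?thesis using c by (simp add: gg_zero)
next
  case False
  hence p: "ps K1 = K1" using psi_un by auto
  have "K1 \<inter> X = K1 \<inter> ((K2 \<inter> A1) \<union> (X - A2))" using X2 mc_sub[OF K1] by auto
  thus ?thesis using p by simp
qed

lemma card_split:
  assumes fa: "finite P" and fb: "finite Q" and d: "P \<inter> Q = {}"
  shows "card (P \<union> Q) = card P + card Q"
  using card_Un_disjoint[OF fa fb d] .

lemma case_i:
  assumes K2: "K2 \<in> M2" and sub: "K2 \<subseteq> X" and XA: "X \<subseteq> A1 \<union> A2" and F: "FF n FA X \<le> int n - 1"
  shows "\<exists>V\<in>FA. X \<subseteq> V"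
proof -
  let ?X2 = "X \<inter> A2" and ?W = "X - A2" and ?C = "K2 \<inter> A1"
  have fX: "finite X" using finite_subset[OF XA] f1 f2 by auto
  have fW: "finite ?W" using fX by auto
  have fK2: "finite K2" using mc_fin[OF K2] .
  have "FF n M2 ?X2 \<le> int n - 1" using mono2[OF XA] Res2[of ?X2] F by auto
  moreover have "n \<le> card ?X2"
  proof -
    have "K2 \<subseteq> ?X2" using sub mc_sub[OF K2] by auto
    hence "card K2 \<le> card ?X2" by (rule card_mono[rotated]) (use fX in auto)
    thus ?thesis using mc_card[OF K2] by simp
  qed
  ultimately obtain K2' where K2': "K2' \<in> M2" "?X2 \<subseteq> K2'" using geo2.G5[of ?X2] by auto
  have "K2 \<subseteq> K2'" using K2' sub mc_sub[OF K2] by auto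
  hence "K2 = K2'" using mc_incomp[OF K2 K2'(1)] by simp
  hence X2: "?X2 = K2" using K2' sub mc_sub[OF K2] by auto
  have Xeq: "X = K2 \<union> ?W" using X2 by auto
  have "card (K2 \<union> ?W) = card K2 + card ?W"
    by (rule card_split[OF fK2 fW]) (use mc_sub[OF K2] in blast)
  hence cX: "card X = card K2 + card ?W" using Xeq by simp
  have fC: "finite ?C" using fK2 by auto
  have cCW: "card (?C \<union> ?W) = card ?C + card ?W"
    by (rule card_split[OF fC fW]) (use mc_sub[OF K2] in blast)
  have CWA: "?C \<union> ?W \<subseteq> A1" using XA by auto
  have U2o: "gg n (card (K2'' \<inter> X)) = 0" if "K2'' \<in> M2" "K2'' \<noteq> K2" for K2''
  proof -
    have "K2'' \<inter> X = K2'' \<inter> K2" using X2 mc_sub[OF that(1)] by auto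
    moreover have "card (K2'' \<inter> K2) + 2 \<le> n" using geo2.G3[OF that(1) K2 that(2)] by simp
    ultimately show ?thesis by (simp add: gg_zero)
  qed
  show ?thesis
  proof (cases "?W = {}")
    case True
    hence XK2: "X = K2" using Xeq by blast
    show ?thesis
    proof (cases "\<exists>K1\<in>M1. n \<le> card (K1 \<inter> K2) + 1")
      case True
      then obtain K1 where K1: "K1 \<in> M1" "n \<le> card (K1 \<inter> K2) + 1" by blast
      have "ps K1 \<in> FA" using FA_eq K1 by auto
      moreover have "X \<subseteq> ps K1" using psi_matched[OF K1(1) K2 K1(2)] XK2 by auto
      ultimately show ?thesis by blast
    next
      case False
      hence "K2 \<in> U2" unfolding mem_M1 using K2 by (auto simp: Int_commute)
      thus ?thesis using FA_eq XK2 by auto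
    qed
  next
    case Wne: False
    have cW: "1 \<le> card ?W" using Wne fW by (simp add: Suc_le_eq card_gt_0_iff)
    show ?thesis
    proof (cases "\<exists>K1\<in>M1. n \<le> card (K1 \<inter> K2) + 1")
      case True
      then obtain Ks where Ks: "Ks \<in> M1" "n \<le> card (Ks \<inter> K2) + 1" by blast
      have Ceq: "?C = Ks \<inter> K2" using F1(2)[OF Ks(1) K2 Ks(2)] .
      have pKs: "ps Ks = Ks \<union> K2" using psi_matched[OF Ks(1) K2 Ks(2)] .
      have fKs: "finite Ks" using mc_fin[OF Ks(1)] .
      have t1: "ps Ks \<inter> X = K2 \<union> (Ks \<inter> ?W)" using pKs Xeq by auto
      have c1: "card (ps Ks \<inter> X) = card K2 + card (Ks \<inter> ?W)"
        unfolding t1 by (rule card_split) (use fK2 fKs mc_sub[OF K2] in auto)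
      have t2: "Ks \<inter> (?C \<union> ?W) = ?C \<union> (Ks \<inter> ?W)" using Ceq by auto
      have c2: "card (Ks \<inter> (?C \<union> ?W)) = card ?C + card (Ks \<inter> ?W)"
        unfolding t2 by (rule card_split) (use fC fKs mc_sub[OF K2] in auto)
      have cC: "n \<le> card ?C + 1" using Ceq Ks(2) by simp
      have g1: "gg n (card (ps Ks \<inter> X)) = int (card K2) + int (card (Ks \<inter> ?W)) - int n + 1"
        using c1 mc_card[OF K2] by (simp add: gg_big)
      have g2: "gg n (card (Ks \<inter> (?C \<union> ?W))) = int (card ?C) + int (card (Ks \<inter> ?W)) - int n + 1"
        using c2 cC by (simp add: gg_big)
      have rest: "(\<Sum>K1\<in>M1 - {Ks}. gg n (card (ps K1 \<inter> X))) = (\<Sum>K1\<in>M1 - {Ks}. gg n (card (K1 \<inter> (?C \<union> ?W))))"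
      proof (rule sum.cong[OF refl])
        fix K1 assume K1: "K1 \<in> M1 - {Ks}"
        have nm: "\<not> n \<le> card (K1 \<inter> K2) + 1" using F2'[OF _ Ks(1) K2 _ Ks(2), of K1] K1 by auto
        show "gg n (card (ps K1 \<inter> X)) = gg n (card (K1 \<inter> (?C \<union> ?W)))"
          using termwise[OF K2 XA X2 F _ nm] K1 by auto
      qed
      have s1: "(\<Sum>K1\<in>M1. gg n (card (ps K1 \<inter> X))) = gg n (card (ps Ks \<inter> X)) + (\<Sum>K1\<in>M1 - {Ks}. gg n (card (ps K1 \<inter> X)))"
        by (rule sum.remove[OF geo1.finKK Ks(1)])
      have s2: "(\<Sum>K1\<in>M1. gg n (card (K1 \<inter> (?C \<union> ?W)))) = gg n (card (Ks \<inter> (?C \<union> ?W))) + (\<Sum>K1\<in>M1 - {Ks}. gg n (card (K1 \<inter> (?C \<union> ?W))))"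
        by (rule sum.remove[OF geo1.finKK Ks(1)])
      have u0: "(\<Sum>K2''\<in>U2. gg n (card (K2'' \<inter> X))) = 0"
      proof (rule sum.neutral, rule ballI)
        fix K2'' assume h: "K2'' \<in> U2"
        have "K2'' \<noteq> K2"
        proof
          assume "K2'' = K2"
          hence "\<not> n \<le> card (K2 \<inter> Ks) + 1" using h Ks(1) unfolding mem_M1 by blast
          thus False using Ks(2) by (simp add: Int_commute)
        qed
        thus "gg n (card (K2'' \<inter> X)) = 0" using U2o h U2_sub by blast
      qed
      have e1: "FF n FA X = int (card X) - (\<Sum>K1\<in>M1. gg n (card (ps K1 \<inter> X))) - (\<Sum>K2\<in>U2. gg n (card (K2 \<inter> X)))"
        by (rule FF_dec)
      have e2: "FF n M1 (?C \<union> ?W) = int (card (?C \<union> ?W)) - (\<Sum>K1\<in>M1. gg n (card (K1 \<inter> (?C \<union> ?W))))"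
        unfolding FF_def by (rule refl)
      have eqF: "FF n M1 (?C \<union> ?W) = FF n FA X"
        using e1 e2 u0 s1 s2 rest cX cCW g1 g2 by linarith
      have "n \<le> card (?C \<union> ?W)" using cCW cC cW by linarith
      then obtain K1 where K1: "K1 \<in> M1" "?C \<union> ?W \<subseteq> K1" using geo1.G5[OF CWA] eqF F by auto
      have "K1 = Ks"
      proof (rule ccontr)
        assume ne: "K1 \<noteq> Ks"
        have "?C \<subseteq> K1 \<inter> Ks" using K1 Ceq by auto
        hence "card ?C \<le> card (K1 \<inter> Ks)" by (rule card_mono[rotated]) (use fKs in auto)
        thus False using geo1.G3[OF K1(1) Ks(1) ne] cC by linarith
      qed
      hence "X \<subseteq> ps Ks" using K1 pKs Xeq by auto
      moreover have "ps Ks \<in> FA" using FA_eq Ks by auto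
      ultimately show ?thesis by blast
    next
      case False
      hence K2U: "K2 \<in> U2" unfolding mem_M1 using K2 by (auto simp: Int_commute)
      have cCn: "card ?C < n" using U2_small[OF K2U] .
      have allT: "(\<Sum>K1\<in>M1. gg n (card (ps K1 \<inter> X))) = (\<Sum>K1\<in>M1. gg n (card (K1 \<inter> (?C \<union> ?W))))"
      proof (rule sum.cong[OF refl])
        fix K1 assume K1: "K1 \<in> M1"
        have nm: "\<not> n \<le> card (K1 \<inter> K2) + 1" using False K1 by blast
        show "gg n (card (ps K1 \<inter> X)) = gg n (card (K1 \<inter> (?C \<union> ?W)))"
          using termwise[OF K2 XA X2 F K1 nm] .
      qed
      have u: "(\<Sum>K2''\<in>U2. gg n (card (K2'' \<inter> X))) = gg n (card (K2 \<inter> X)) + (\<Sum>K2''\<in>U2 - {K2}. gg n (card (K2'' \<inter> X)))"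
        by (rule sum.remove[OF finU2 K2U])
      have u0: "(\<Sum>K2''\<in>U2 - {K2}. gg n (card (K2'' \<inter> X))) = 0"
        by (rule sum.neutral) (use U2o U2_sub in blast)
      have gK2: "gg n (card (K2 \<inter> X)) = int (card K2) - int n + 1"
        using sub mc_card[OF K2] by (simp add: Int_absorb2 gg_big)
      have e1: "FF n FA X = int (card X) - (\<Sum>K1\<in>M1. gg n (card (ps K1 \<inter> X))) - (\<Sum>K2\<in>U2. gg n (card (K2 \<inter> X)))"
        by (rule FF_dec)
      have e2: "FF n M1 (?C \<union> ?W) = int (card (?C \<union> ?W)) - (\<Sum>K1\<in>M1. gg n (card (K1 \<inter> (?C \<union> ?W))))"
        unfolding FF_def by (rule refl)
      have eqF: "FF n M1 (?C \<union> ?W) = FF n FA X - (int n - 1) + int (card ?C)"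
        using e1 e2 u u0 allT cX cCW gK2 by linarith
      show ?thesis
      proof (cases "n \<le> card (?C \<union> ?W)")
        case True
        then obtain K1 where K1: "K1 \<in> M1" "?C \<union> ?W \<subseteq> K1" using geo1.G5[OF CWA] eqF F cCn by auto
        have "FF n M1 (?C \<union> ?W) = int n - 1" using geo1.G6[OF K1 True] .
        hence "n \<le> card ?C + 1" using eqF F by linarith
        moreover have "card ?C \<le> card (K2 \<inter> K1)"
          by (rule card_mono) (use fK2 K1 in auto)
        ultimately have "n \<le> card (K2 \<inter> K1) + 1" by linarith
        thus ?thesis using K2U K1(1) unfolding mem_M1 by blast
      next
        case False
        hence "FF n M1 (?C \<union> ?W) = int (card (?C \<union> ?W))"
          by (intro FF_small) (use fC fW in auto)
        thus ?thesis using eqF F cCW cW by linarith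
      qed
    qed
  qed
qed

end



context amal_str
begin

lemma P2:
  assumes XA: "X \<subseteq> A1 \<union> A2" and c: "n \<le> card X" and F: "FF n FA X \<le> int n - 1"
  shows "\<exists>V\<in>FA. X \<subseteq> V"
proof -
  have fX: "finite X" using finite_subset[OF XA] f1 f2 by auto
  have ex_big: "\<exists>V\<in>FA. n \<le> card (V \<inter> X)"
  proof (rule ccontr)
    assume "\<not> ?thesis"
    hence "\<forall>V\<in>FA. gg n (card (V \<inter> X)) = 0" by (auto simp: gg_zero)
    hence "FF n FA X = int (card X)" unfolding FF_def by simp
    thus False using c F by linarith
  qed
  show ?thesis
  proof (cases "\<exists>V\<in>FA. n \<le> card (V \<inter> X) \<and> V \<notin> U1")
    case True
    then obtain V where V: "V \<in> FA" "n \<le> card (V \<inter> X)" "V \<notin> U1" by blast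
    have "V \<in> MM \<union> U2" using V unfolding FAM_def by blast
    then obtain K2 where K2: "K2 \<in> M2" "K2 \<subseteq> V"
    proof
      assume "V \<in> MM"
      thus ?thesis using that unfolding mem_M by blast
    next
      assume "V \<in> U2"
      thus ?thesis using that U2_sub by blast
    qed
    have F': "FF n FA (X \<union> V) \<le> int n - 1"
      using add_big[OF finFA V(1) FA_props(1)[OF V(1)] fX V(2)] F by linarith
    have XA': "X \<union> V \<subseteq> A1 \<union> A2" using XA FA_props(2)[OF V(1)] by auto
    obtain V' where "V' \<in> FA" "X \<union> V \<subseteq> V'" using case_i[OF K2(1) _ XA' F'] K2(2) by blast
    thus ?thesis by blast
  next
    case False
    hence allU1: "\<And>V. V \<in> FA \<Longrightarrow> n \<le> card (V \<inter> X) \<Longrightarrow> V \<in> U1" by blast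
    obtain V where V: "V \<in> FA" "n \<le> card (V \<inter> X)" using ex_big by blast
    have VA1: "V \<subseteq> A1" using allU1[OF V] U1_sub mc_sub by blast
    have cX1: "n \<le> card (X \<inter> A1)"
    proof -
      have "card (V \<inter> X) \<le> card (X \<inter> A1)" by (rule card_mono) (use fX VA1 in auto)
      thus ?thesis using V(2) by simp
    qed
    have tw: "gg n (card (V \<inter> X)) = gg n (card (V \<inter> (X \<inter> A1)))" if VF: "V \<in> FA" for V
    proof (cases "n \<le> card (V \<inter> X)")
      case True
      hence "V \<subseteq> A1" using allU1[OF VF] U1_sub mc_sub by blast
      hence "V \<inter> X = V \<inter> (X \<inter> A1)" by auto
      thus ?thesis by simp
    next
      case False
      have "card (V \<inter> (X \<inter> A1)) \<le> card (V \<inter> X)" by (rule card_mono) (use fX in auto)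
      thus ?thesis using False by (simp add: gg_zero)
    qed
    have cX: "card X = card (X - A1) + card (X \<inter> A1)"
    proof -
      have "X = (X - A1) \<union> (X \<inter> A1)" by auto
      moreover have "card ((X - A1) \<union> (X \<inter> A1)) = card (X - A1) + card (X \<inter> A1)"
        by (rule card_Un_disjoint) (use fX in auto)
      ultimately show ?thesis by simp
    qed
    have s: "(\<Sum>V\<in>FA. gg n (card (V \<inter> X))) = (\<Sum>V\<in>FA. gg n (card (V \<inter> (X \<inter> A1))))"
      by (rule sum.cong[OF refl tw])
    have eqF: "FF n FA X = int (card (X - A1)) + FF n FA (X \<inter> A1)"
      unfolding FF_def s using cX by simp
    have "int n - 1 \<le> FF n M1 (X \<inter> A1)" using geo1.G7[OF _ cX1] by simp
    hence "FF n FA (X \<inter> A1) \<ge> int n - 1" using Res1[of "X \<inter> A1"] by simp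
    hence "card (X - A1) = 0" using eqF F by linarith
    hence "X - A1 = {}" using fX by simp
    hence XA1: "X \<subseteq> A1" by auto
    have "FF n M1 X \<le> int n - 1" using Res1[OF XA1] F by simp
    then obtain K1 where K1: "K1 \<in> M1" "X \<subseteq> K1" using geo1.G5[OF XA1 c] by blast
    have "ps K1 \<in> FA" using FA_eq K1 by auto
    moreover have "X \<subseteq> ps K1" using K1 psi_sup by blast
    ultimately show ?thesis by blast
  qed
qed

lemma L1:
  assumes V: "V \<in> FA" and V': "V' \<in> FA" and ne: "V \<noteq> V'"
  shows "card (V \<inter> V') + 2 \<le> n"
proof (rule ccontr)
  assume "\<not> ?thesis"
  hence c: "n \<le> card (V \<inter> V') + 1" by simp
  have fV: "finite V" "finite V'" using FA_props(1) V V' by auto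
  let ?X = "V \<union> V'"
  have XA: "?X \<subseteq> A1 \<union> A2" using FA_props(2) V V' by auto
  have cV: "n \<le> card V" "n \<le> card V'" using FA_props(3) V V' by auto
  have "gg n (card (V \<inter> ?X)) + gg n (card (V' \<inter> ?X)) \<le> (\<Sum>W\<in>FA. gg n (card (W \<inter> ?X)))"
    by (rule sum_two_le[OF finFA V V' ne]) (simp add: gg_nonneg)
  moreover have "V \<inter> ?X = V" "V' \<inter> ?X = V'" by auto
  moreover have "gg n (card V) = int (card V) - int n + 1" "gg n (card V') = int (card V') - int n + 1"
    using cV by (simp_all add: gg_big)
  moreover have "card ?X = card V + card V' - card (V \<inter> V')" using card_Un_Int[OF fV] by simp
  moreover have "card (V \<inter> V') \<le> card V" by (rule card_mono) (use fV in auto)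
  ultimately have "FF n FA ?X \<le> int n - 1" unfolding FF_def using c by simp
  moreover have "n \<le> card ?X"
  proof -
    have "card V \<le> card ?X" by (rule card_mono) (use fV in auto)
    thus ?thesis using cV by simp
  qed
  ultimately obtain W where W: "W \<in> FA" "?X \<subseteq> W" using P2[OF XA] by blast
  have "V = W" using FA_incomp[OF V W(1)] W(2) by auto
  moreover have "V' = W" using FA_incomp[OF V' W(1)] W(2) by auto
  ultimately show False using ne by simp
qed

abbreviation "SD \<equiv> amalg_S n A1 S1 A2 S2"

lemma SD_mem: "e \<in> SD \<longleftrightarrow> e \<subseteq> A1 \<union> A2 \<and> card e = n \<and> (\<exists>K\<in>FA. e \<subseteq> K)"
  unfolding amalg_S_def FAM_def by simp

lemma FA_clique: "V \<in> FA \<Longrightarrow> clique n (A1 \<union> A2) SD V"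
  unfolding clique_def SD_mem using FA_props by blast

lemma L2:
  assumes "clique n (A1 \<union> A2) SD Q"
  shows "\<exists>V\<in>FA. Q \<subseteq> V"
  using assms
proof (induction "card Q" arbitrary: Q rule: less_induct)
  case less
  have fQ: "finite Q" and cQ: "n \<le> card Q" and QA: "Q \<subseteq> A1 \<union> A2"
    using less.prems by (auto simp: clique_def)
  show ?case
  proof (cases "card Q = n")
    case True
    hence "Q \<in> SD" using less.prems by (auto simp: clique_def)
    thus ?thesis unfolding SD_mem by blast
  next
    case False
    hence cQ': "n + 1 \<le> card Q" using cQ by simp
    have "Q \<noteq> {}" using cQ' by auto
    then obtain z where z: "z \<in> Q" by blast
    have "card (Q - {z}) = card Q - 1" using z fQ by simp
    hence "card (Q - {z}) \<noteq> 0" using cQ' n1 by linarith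
    hence "Q - {z} \<noteq> {}" by (metis card.empty)
    then obtain z' where z': "z' \<in> Q" "z' \<noteq> z" by blast
    have c1: "card (Q - {z}) = card Q - 1" using z fQ by simp
    have c2: "card (Q - {z'}) = card Q - 1" using z' fQ by simp
    have cl1: "clique n (A1 \<union> A2) SD (Q - {z})"
      by (rule clique_subset[OF less.prems]) (use c1 cQ' in auto)
    have cl2: "clique n (A1 \<union> A2) SD (Q - {z'})"
      by (rule clique_subset[OF less.prems]) (use c2 cQ' in auto)
    obtain V where V: "V \<in> FA" "Q - {z} \<subseteq> V"
      using less.hyps[OF _ cl1] c1 cQ' by auto
    obtain V' where V': "V' \<in> FA" "Q - {z'} \<subseteq> V'"
      using less.hyps[OF _ cl2] c2 cQ' by auto
    have "V = V'"
    proof (rule ccontr)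
      assume ne: "V \<noteq> V'"
      have sub: "Q - {z, z'} \<subseteq> V \<inter> V'" using V V' by auto
      have "card (Q - {z, z'}) = card Q - 2" using z z' fQ by (simp add: card_Diff_subset)
      moreover have "card (Q - {z, z'}) \<le> card (V \<inter> V')"
        by (rule card_mono[OF _ sub]) (use FA_props(1)[OF V(1)] in auto)
      ultimately show False using L1[OF V(1) V'(1) ne] cQ' by linarith
    qed
    hence "Q \<subseteq> V" using V V' z' by auto
    thus ?thesis using V by blast
  qed
qed

lemma MC_eq: "maxcliques n (A1 \<union> A2) SD = FA"
proof
  show "maxcliques n (A1 \<union> A2) SD \<subseteq> FA"
  proof
    fix K assume K: "K \<in> maxcliques n (A1 \<union> A2) SD"
    obtain V where V: "V \<in> FA" "K \<subseteq> V" using L2[OF mc_clique[OF K]] by blast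
    have "V = K" using mc_max[OF K FA_clique[OF V(1)] V(2)] .
    thus "K \<in> FA" using V by simp
  qed
next
  show "FA \<subseteq> maxcliques n (A1 \<union> A2) SD"
  proof
    fix V assume V: "V \<in> FA"
    have "K' = V" if cK: "clique n (A1 \<union> A2) SD K'" and sV: "V \<subseteq> K'" for K'
    proof -
      obtain V' where V': "V' \<in> FA" "K' \<subseteq> V'" using L2[OF cK] by blast
      have "V = V'" using FA_incomp[OF V V'(1)] sV V'(2) by auto
      thus ?thesis using sV V' by auto
    qed
    thus "V \<in> maxcliques n (A1 \<union> A2) SD" unfolding maxcliques_def using FA_clique[OF V] by blast
  qed
qed

lemma D_rep:
  assumes "X \<subseteq> A1 \<union> A2"
  shows "delta_on n SD X = FF n FA X"
proof -
  have "delta_on n SD X = FF n (maxcliques n (A1 \<union> A2) SD) X"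
  proof (rule rep)
    show "finite (A1 \<union> A2)" using f1 f2 by simp
    show "X \<subseteq> A1 \<union> A2" by fact
    fix K L assume "K \<in> maxcliques n (A1 \<union> A2) SD" "L \<in> maxcliques n (A1 \<union> A2) SD" "K \<noteq> L"
    thus "card (K \<inter> L) < n" using L1 MC_eq by fastforce
  qed
  thus ?thesis using MC_eq by simp
qed

lemma D_geo: "geometric n (A1 \<union> A2) SD"
  unfolding geometric_def
proof (intro allI impI)
  fix X assume h: "X \<subseteq> A1 \<union> A2 \<and> finite X \<and> n \<le> card X \<and> delta_on n SD X < int n"
  hence XA: "X \<subseteq> A1 \<union> A2" and c: "n \<le> card X" and F: "FF n FA X \<le> int n - 1"
    using D_rep[of X] by auto
  obtain V where V: "V \<in> FA" "X \<subseteq> V" using P2[OF XA c F] by blast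
  have u: "V' = V" if "V' \<in> FA" "X \<subseteq> V'" for V'
  proof (rule ccontr)
    assume ne: "V' \<noteq> V"
    have "card X \<le> card (V' \<inter> V)"
      by (rule card_mono) (use FA_props(1)[OF V(1)] V that in auto)
    thus False using L1[OF that(1) V(1) ne] c by linarith
  qed
  show "\<exists>!K. K \<in> maxcliques n (A1 \<union> A2) SD \<and> X \<subseteq> K"
    unfolding MC_eq using V u by blast
qed

end

lemma geo0:
  assumes fA: "finite A"
  shows "geometric 0 A S"
  unfolding geometric_def
proof (intro allI impI)
  fix X assume h: "X \<subseteq> A \<and> finite X \<and> 0 \<le> card X \<and> delta_on 0 S X < int 0"
  have XA: "X \<subseteq> A" using h by simp
  have eS: "{} \<in> S"
  proof (rule ccontr)
    assume nS: "{} \<notin> S"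
    have "maxcliques 0 X (induced S X) = {}"
    proof -
      have "\<not> clique 0 X (induced S X) K" for K
        using nS unfolding clique_def induced_def by auto
      thus ?thesis unfolding maxcliques_def by auto
    qed
    hence "delta_on 0 S X = int (card X)" unfolding delta_on_def delta_def s_count_def by simp
    thus False using h by simp
  qed
  have cl: "clique 0 A S K \<longleftrightarrow> K \<subseteq> A" for K
  proof
    assume "K \<subseteq> A"
    moreover have "finite K" using finite_subset[OF \<open>K \<subseteq> A\<close> fA] .
    moreover have "e \<in> S" if "e \<subseteq> K" "card e = 0" for e
    proof -
      have "finite e" using finite_subset[OF that(1) \<open>finite K\<close>] .
      hence "e = {}" using that(2) by simp
      thus ?thesis using eS by simp
    qed
    ultimately show "clique 0 A S K" unfolding clique_def by auto
  qed (simp add: clique_def)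
  have "maxcliques 0 A S = {A}"
  proof
    show "maxcliques 0 A S \<subseteq> {A}"
    proof
      fix K assume K: "K \<in> maxcliques 0 A S"
      have "A = K" using mc_max[OF K] cl mc_sub[OF K] by blast
      thus "K \<in> {A}" by simp
    qed
    show "{A} \<subseteq> maxcliques 0 A S" unfolding maxcliques_def using cl by auto
  qed
  thus "\<exists>!K. K \<in> maxcliques 0 A S \<and> X \<subseteq> K" using XA by auto
qed

theorem mainTheorem1:
  fixes n :: nat and A1 A2 :: "'a set" and S1 S2 :: "'a set set"
  assumes "Cgeo n A1 S1" and "Cgeo n A2 S2"
    and "induced S1 (A1 \<inter> A2) = induced S2 (A1 \<inter> A2)"
    and "strong_sub n (A1 \<inter> A2) A1 S1"
  shows "Cgeo n (A1 \<union> A2) (amalg_S n A1 S1 A2 S2)"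
proof -
  have fin: "finite (A1 \<union> A2)" using assms(1,2) by (simp add: Cgeo_def)
  have st: "struct n (A1 \<union> A2) (amalg_S n A1 S1 A2 S2)"
    unfolding struct_def amalg_S_def by auto
  show ?thesis
  proof (cases "n = 0")
    case True
    thus ?thesis unfolding Cgeo_def using fin st geo0[OF fin] by simp
  next
    case False
    interpret amal_str n A1 A2 S1 S2
      using assms False by unfold_locales (auto simp: Cgeo_def)
    show ?thesis unfolding Cgeo_def using fin st D_geo by simp
  qed
qed


end
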